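(* Let $N,K\ge 2$ ... more precisely, let $N\ge1$, $K\ge 1$, and let $\mathcal{P}$ be a probability distribution on pairs $(a_h,f_h)\in\mathcal{A}\times\mathcal{F}\subseteq\mathbb{R}^N\times\mathbb{R}^N$. For each $(a_h,f_h)$ let $\mathcal{L}_h^a\in\mathbb{R}^{N\times N}$ be the associated linear discrete operator, let $u_h=\mathcal{G}_h(a_h,f_h)$ be the discrete solution (a measurable function of $(a_h,f_h)$), and let $u_h^{(t)}=U_t(a_h,f_h)\in\mathcal{U}$ be the current iterate, a fixed measurable function of $(a_h,f_h)$. Let $C_1,\dots,C_K:\mathbb{R}^N\to\mathbb{R}^N$ be arbitrary (measurable) solver maps and set $$\tilde c_j=\tilde c_j(a_h,u_h^{(t)},u_h)=\bigl\|(I-C_j\circ\mathcal{L}_h^a)(u_h-u_h^{(t)})\bigr\|_2^2,\quad j\in[K].$$ Assume there are constants $0<E_{\min}$ and $\bar E<\infty$ such that, for $\mathcal{P}$-almost every $(a_h,f_h)$, $\tilde c_j<\bar E$ for all $j\in[K]$ and $\tilde c_j>E_{\min}$ for at least one $j\in[K]$. Then $\Psi$ is a Bayes-consistent surrogate for $l_{\text{route}}$: for every sequence of measurable score functions $\mathbf g_n=(g_{n,1},\dots,g_{n,K})$ with $\mathcal{R}_\Psi(\mathbf g_n)\to\mathcal{R}_\Psi^*$, the induced routers $r_n=\operatorname{argmax}_{j\in[K]}g_{n,j}$ satisfy $\mathcal{R}_{\text{route}}(r_n)\to\mathcal{R}_{\text{route}}^*$.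
   Context: Inputs are $x=(a_h,f_h,u_h^{(t)})\in\mathcal{A}\times\mathcal{F}\times\mathcal{U}$. A score function is $\mathbf g=(g_1,\dots,g_K)$ with $g_j:\mathcal{A}\times\mathcal{F}\times\mathcal{U}\to\mathbb{R}$; its induced router is $r(x)=\operatorname{argmax}_{j\in[K]}g_j(x)$ (ties broken by any fixed rule). The routing loss is $l_{\text{route}}(r,a_h,f_h,u_h^{(t)},u_h)=\sum_{j=1}^K\tilde c_j\,\mathbf 1_{r(a_h,f_h,u_h^{(t)})=j}$, and the surrogate loss is $$\Psi(\mathbf g,a_h,f_h,u_h^{(t)},u_h)=-\sum_{j=1}^K\sum_{k=1}^K\tilde c_k\,\mathbf 1_{k\ne j}\log\left(\frac{\exp(g_j(a_h,f_h,u_h^{(t)}))}{\sum_{m=1}^K\exp(g_m(a_h,f_h,u_h^{(t)}))}\right).$$ Risks: $\mathcal{R}_{\text{route}}(r)=\mathbb{E}_{(a_h,f_h)\sim\mathcal{P}}[l_{\text{route}}(r,a_h,f_h,u_h^{(t)},u_h)]$ and $\mathcal{R}_\Psi(\mathbf g)=\mathbb{E}_{(a_h,f_h)\sim\mathcal{P}}[\Psi(\mathbf g,a_h,f_h,u_h^{(t)},u_h)]$, with $u_h^{(t)}=U_t(a_h,f_h)$ and $u_h=\mathcal{G}_h(a_h,f_h)$; $\mathcal{R}_{\text{route}}^*$ and $\mathcal{R}_\Psi^*$ denote the infima of these risks over all measurable routers, resp. all measurable score functions. *)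

theory Defs
  imports "HOL-Probability.Probability"
begin

text \<open>Samples are pairs (a_h, f_h) in R^N x R^N; router/score inputs are
  triples (a_h, f_h, u_h^(t)) in R^N x R^N x R^N. Expert indices are 0..K-1.\<close>

type_synonym 'n input = "(real^'n) \<times> (real^'n) \<times> (real^'n)"

definition expert_cost ::
  "(real^'n \<Rightarrow> real^'n^'n) \<Rightarrow> ((real^'n) \<times> (real^'n) \<Rightarrow> real^'n) \<Rightarrow>
   ((real^'n) \<times> (real^'n) \<Rightarrow> real^'n) \<Rightarrow> (nat \<Rightarrow> real^'n \<Rightarrow> real^'n) \<Rightarrow>
   nat \<Rightarrow> (real^'n) \<times> (real^'n) \<Rightarrow> real" where
  "expert_cost L G Ut C j \<omega> =
     (let e = G \<omega> - Ut \<omega> in (norm (e - C j (L (fst \<omega>) *v e)))\<^sup>2)"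

text \<open>Router induced by a score function: argmax with a fixed tie-breaking rule tb
  (tb picks an element of the nonempty set of maximisers).\<close>
definition induced_router ::
  "(nat set \<Rightarrow> nat) \<Rightarrow> nat \<Rightarrow> (nat \<Rightarrow> 'x \<Rightarrow> real) \<Rightarrow> 'x \<Rightarrow> nat" where
  "induced_router tb K g x = tb {j. j < K \<and> (\<forall>k<K. g k x \<le> g j x)}"

definition route_loss :: "nat \<Rightarrow> (nat \<Rightarrow> real) \<Rightarrow> nat \<Rightarrow> real" where
  "route_loss K c r = (\<Sum>j<K. c j * (if r = j then 1 else 0))"

definition surrogate_loss :: "nat \<Rightarrow> (nat \<Rightarrow> real) \<Rightarrow> (nat \<Rightarrow> real) \<Rightarrow> real" where
  "surrogate_loss K c gv =
     - (\<Sum>j<K. \<Sum>k<K. c k * (if k \<noteq> j then 1 else 0) *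
          ln (exp (gv j) / (\<Sum>m<K. exp (gv m))))"

definition route_risk ::
  "((real^'n) \<times> (real^'n)) measure \<Rightarrow> nat \<Rightarrow> (nat \<Rightarrow> (real^'n) \<times> (real^'n) \<Rightarrow> real) \<Rightarrow>
   ((real^'n) \<times> (real^'n) \<Rightarrow> real^'n) \<Rightarrow> ('n input \<Rightarrow> nat) \<Rightarrow> ennreal" where
  "route_risk M K c Ut r =
     (\<integral>\<^sup>+ \<omega>. ennreal (route_loss K (\<lambda>j. c j \<omega>) (r (fst \<omega>, snd \<omega>, Ut \<omega>))) \<partial>M)"

definition surrogate_risk ::
  "((real^'n) \<times> (real^'n)) measure \<Rightarrow> nat \<Rightarrow> (nat \<Rightarrow> (real^'n) \<times> (real^'n) \<Rightarrow> real) \<Rightarrow>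
   ((real^'n) \<times> (real^'n) \<Rightarrow> real^'n) \<Rightarrow> (nat \<Rightarrow> 'n input \<Rightarrow> real) \<Rightarrow> ennreal" where
  "surrogate_risk M K c Ut g =
     (\<integral>\<^sup>+ \<omega>. ennreal (surrogate_loss K (\<lambda>j. c j \<omega>) (\<lambda>j. g j (fst \<omega>, snd \<omega>, Ut \<omega>))) \<partial>M)"

definition route_risk_star ::
  "((real^'n) \<times> (real^'n)) measure \<Rightarrow> nat \<Rightarrow> (nat \<Rightarrow> (real^'n) \<times> (real^'n) \<Rightarrow> real) \<Rightarrow>
   ((real^'n) \<times> (real^'n) \<Rightarrow> real^'n) \<Rightarrow> ennreal" where
  "route_risk_star M K c Ut =
     (INF r \<in> {r :: 'n input \<Rightarrow> nat. r \<in> borel \<rightarrow>\<^sub>M count_space UNIV \<and> (\<forall>x. r x < K)}.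
        route_risk M K c Ut r)"

definition surrogate_risk_star ::
  "((real^'n) \<times> (real^'n)) measure \<Rightarrow> nat \<Rightarrow> (nat \<Rightarrow> (real^'n) \<times> (real^'n) \<Rightarrow> real) \<Rightarrow>
   ((real^'n) \<times> (real^'n) \<Rightarrow> real^'n) \<Rightarrow> ennreal" where
  "surrogate_risk_star M K c Ut =
     (INF g \<in> {g :: nat \<Rightarrow> 'n input \<Rightarrow> real. \<forall>j<K. g j \<in> borel_measurable borel}.
        surrogate_risk M K c Ut g)"

end

theory Submission
  imports Defs
begin


definition wt :: "nat \<Rightarrow> (nat \<Rightarrow> real) \<Rightarrow> nat \<Rightarrow> real" where
  "wt K c j = (\<Sum>k<K. c k) - c j"
definition Wt :: "nat \<Rightarrow> (nat \<Rightarrow> real) \<Rightarrow> real" where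
  "Wt K c = (\<Sum>j<K. wt K c j)"
definition Hent :: "nat \<Rightarrow> (nat \<Rightarrow> real) \<Rightarrow> real" where
  "Hent K c = (\<Sum>j<K. wt K c j * ln (Wt K c / wt K c j))"

lemma inner_sum_eq:
  assumes "j < K"
  shows "(\<Sum>k<K. c k * (if k \<noteq> j then 1 else 0)) = wt K c j"
proof -
  have "(\<Sum>k<K. c k * (if k \<noteq> j then 1 else 0)) = (\<Sum>k<K. c k - (if k = j then c k else 0))"
    by (rule sum.cong) auto
  also have "\<dots> = (\<Sum>k<K. c k) - c j" using assms by (simp add: sum_subtractf)
  finally show ?thesis by (simp add: wt_def)
qed

lemma wt_nonneg:
  assumes "\<forall>j<K. c j \<ge> 0" "j < K" shows "wt K c j \<ge> 0"
proof -
  have "c j \<le> (\<Sum>k<K. c k)" using assms by (intro member_le_sum) auto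
  thus ?thesis by (simp add: wt_def)
qed

lemma wt_le_Wt:
  assumes "\<forall>j<K. c j \<ge> 0" "j < K" shows "wt K c j \<le> Wt K c"
  unfolding Wt_def using assms by (intro member_le_sum) (auto intro: wt_nonneg)

lemma Wt_nonneg:
  assumes "\<forall>j<K. c j \<ge> 0" shows "Wt K c \<ge> 0"
  unfolding Wt_def using assms by (intro sum_nonneg) (auto intro: wt_nonneg)

lemma surr_formula:
  assumes "K \<ge> 1"
  shows "surrogate_loss K c v = (\<Sum>j<K. wt K c j * (ln (\<Sum>m<K. exp (v m)) - v j))"
proof -
  have Z: "(\<Sum>m<K. exp (v m)) > 0" using assms by (intro sum_pos) (auto simp: lessThan_empty_iff)
  have "surrogate_loss K c v = - (\<Sum>j<K. wt K c j * ln (exp (v j) / (\<Sum>m<K. exp (v m))))"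
    unfolding surrogate_loss_def
  proof (intro arg_cong[where f=uminus] sum.cong refl)
    fix j assume "j \<in> {..<K}"
    then have "(\<Sum>k<K. c k * (if k \<noteq> j then 1 else 0) * ln (exp (v j) / (\<Sum>m<K. exp (v m))))
       = (\<Sum>k<K. c k * (if k \<noteq> j then 1 else 0)) * ln (exp (v j) / (\<Sum>m<K. exp (v m)))"
      by (simp add: sum_distrib_right)
    then show "(\<Sum>k<K. c k * (if k \<noteq> j then 1 else 0) * ln (exp (v j) / (\<Sum>m<K. exp (v m))))
       = wt K c j * ln (exp (v j) / (\<Sum>m<K. exp (v m)))" using \<open>j \<in> {..<K}\<close> by (simp add: inner_sum_eq)
  qed
  also have "\<dots> = (\<Sum>j<K. wt K c j * (ln (\<Sum>m<K. exp (v m)) - v j))"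
    using Z by (simp add: ln_div sum_negf[symmetric] algebra_simps)
  finally show ?thesis .
qed

lemma per_term:
  fixes w t :: real
  assumes "w \<ge> 0" "t > 0"
  shows "w * ln (w / t) \<ge> (sqrt w - sqrt t)^2 + w - t"
proof (cases "w = 0")
  case True thus ?thesis using assms by simp
next
  case False
  hence wp: "w > 0" using assms by simp
  define s where "s = sqrt t / sqrt w"
  have sp: "s > 0" using wp assms by (simp add: s_def)
  have "ln s \<le> s - 1" using sp by (rule ln_le_minus_one)
  have s2: "s^2 = t / w" using wp assms by (simp add: s_def power_divide)
  have "ln (w / t) = - ln (s^2)" using wp assms s2 by (simp add: ln_div)
  also have "\<dots> = - 2 * ln s" using sp by (simp add: ln_realpow)
  finally have l: "ln (w/t) = -2 * ln s" .
  have ws: "w * s = sqrt w * sqrt t" using wp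
    by (simp add: s_def field_simps)
  have "w * ln s \<le> w * (s - 1)" using \<open>ln s \<le> s - 1\<close> wp by (intro mult_left_mono) auto
  hence "w * ln (w/t) \<ge> 2 * w - 2 * (w * s)" using l by (simp add: algebra_simps)
  moreover have "(sqrt w - sqrt t)^2 + w - t = 2 * w - 2 * (sqrt w * sqrt t)"
    using wp assms by (simp add: power2_eq_square algebra_simps)
  ultimately show ?thesis using ws by simp
qed


lemma hellinger:
  assumes K: "K \<ge> 1" and c: "\<forall>j<K. c j \<ge> 0"
  shows "surrogate_loss K c v - Hent K c \<ge>
     (\<Sum>j<K. (sqrt (wt K c j) - sqrt (Wt K c * (exp (v j) / (\<Sum>m<K. exp (v m)))))^2)"
proof -
  define Z where "Z = (\<Sum>m<K. exp (v m))"
  define W where "W = Wt K c"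
  define p where "p j = exp (v j) / Z" for j
  have Z: "Z > 0" unfolding Z_def using K by (intro sum_pos) (auto simp: lessThan_empty_iff)
  have pp: "p j > 0" for j using Z by (simp add: p_def)
  have sp: "(\<Sum>j<K. p j) = 1" using Z by (simp add: p_def Z_def sum_divide_distrib[symmetric])
  have W0: "W \<ge> 0" using Wt_nonneg[OF c] by (simp add: W_def)
  have trm: "wt K c j * (ln Z - v j) - wt K c j * ln (W / wt K c j) \<ge>
      (sqrt (wt K c j) - sqrt (W * p j))^2 + wt K c j - W * p j" if j: "j < K" for j
  proof (cases "wt K c j = 0")
    case True
    thus ?thesis using W0 pp[of j] by (simp add: power2_eq_square)
  next
    case False
    hence wp: "wt K c j > 0" using wt_nonneg[OF c j] by simp
    hence Wp: "W > 0" using wt_le_Wt[OF c j] by (simp add: W_def)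
    have "wt K c j * (ln Z - v j) - wt K c j * ln (W / wt K c j) = wt K c j * ln (wt K c j / (W * p j))"
      using wp Wp Z pp[of j] by (simp add: p_def ln_div ln_mult algebra_simps)
    also have "\<dots> \<ge> (sqrt (wt K c j) - sqrt (W * p j))^2 + wt K c j - W * p j"
      using wp Wp pp[of j] by (intro per_term) auto
    finally show ?thesis .
  qed
  have "surrogate_loss K c v - Hent K c = (\<Sum>j<K. wt K c j * (ln Z - v j) - wt K c j * ln (W / wt K c j))"
    by (simp add: surr_formula[OF K] Hent_def Z_def W_def sum_subtractf)
  also have "\<dots> \<ge> (\<Sum>j<K. (sqrt (wt K c j) - sqrt (W * p j))^2 + wt K c j - W * p j)"
    using trm by (intro sum_mono) auto
  also have "(\<Sum>j<K. (sqrt (wt K c j) - sqrt (W * p j))^2 + wt K c j - W * p j)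
     = (\<Sum>j<K. (sqrt (wt K c j) - sqrt (W * p j))^2) + W - W * (\<Sum>j<K. p j)"
    by (simp add: sum.distrib sum_subtractf sum_distrib_left W_def Wt_def)
  finally show ?thesis using sp by (simp add: W_def p_def Z_def)
qed


lemma sum_sq_le:
  fixes u v :: real shows "(u + v)^2 \<le> 2 * (u^2 + v^2)"
proof -
  have "0 \<le> (u - v)^2" by simp
  moreover have "2 * (u^2 + v^2) - (u + v)^2 = (u - v)^2" by (simp add: power2_eq_square algebra_simps)
  ultimately show ?thesis by linarith
qed

lemma sq_aux:
  fixes a b x y :: real
  assumes "b \<le> a" "x \<le> y" 
  shows "(a - b)^2 \<le> 2 * ((a - x)^2 + (b - y)^2)"
proof -
  have "(a - b) \<le> (a - x) + (y - b)" using assms by simp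
  moreover have "0 \<le> a - b" using assms by simp
  ultimately have "(a - b)^2 \<le> ((a - x) + (y - b))^2" by (intro power_mono) auto
  also have "\<dots> \<le> 2 * ((a - x)^2 + (b - y)^2)"
    using sum_sq_le[of "a - x" "y - b"] by (simp add: power2_commute[of b y])
  finally show ?thesis .
qed

lemma route_bound:
  assumes K: "K \<ge> 1" and c: "\<forall>j<K. c j \<ge> 0" and ij: "i < K" "j < K"
    and v: "v j \<le> v i" and cc: "c j \<le> c i"
  shows "(c i - c j)^2 \<le> 8 * Wt K c * (surrogate_loss K c v - Hent K c)"
proof -
  define Z where "Z = (\<Sum>m<K. exp (v m))"
  define W where "W = Wt K c"
  define E where "E = surrogate_loss K c v - Hent K c"
  define sq where "sq l = (sqrt (wt K c l) - sqrt (W * (exp (v l) / Z)))^2" for l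
  have H: "E \<ge> (\<Sum>l<K. sq l)" using hellinger[OF K c, of v] by (simp add: E_def sq_def W_def Z_def)
  have W0: "W \<ge> 0" using Wt_nonneg[OF c] by (simp add: W_def)
  have sq0: "sq l \<ge> 0" for l by (simp add: sq_def)
  have E0: "E \<ge> 0" using H sum_nonneg[of "{..<K}" sq] sq0 by force
  show ?thesis
  proof (cases "i = j")
    case True thus ?thesis using E0 W0 by (simp add: E_def W_def)
  next
    case False
    have "sq j + sq i = (\<Sum>l\<in>{j,i}. sq l)" using False by simp
    also have "\<dots> \<le> (\<Sum>l<K. sq l)" using ij sq0 by (intro sum_mono2) auto
    finally have E2: "sq j + sq i \<le> E" using H by simp
    have Z: "Z > 0" unfolding Z_def using K by (intro sum_pos) (auto simp: lessThan_empty_iff)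
    define a where "a = sqrt (wt K c j)"
    define b where "b = sqrt (wt K c i)"
    define x where "x = sqrt (W * (exp (v j) / Z))"
    define y where "y = sqrt (W * (exp (v i) / Z))"
    have wj: "wt K c j \<ge> 0" "wt K c i \<ge> 0" using wt_nonneg[OF c] ij by auto
    have ba: "b \<le> a" using cc unfolding a_def b_def wt_def by simp
    have "exp (v j) / Z \<le> exp (v i) / Z" using v Z by (simp add: divide_right_mono)
    hence "W * (exp (v j) / Z) \<le> W * (exp (v i) / Z)" using W0 by (rule mult_left_mono)
    hence xy: "x \<le> y" unfolding x_def y_def by (rule real_sqrt_le_mono)
    have sq2: "(a - b)^2 \<le> 2 * E" using sq_aux[OF ba xy] E2 by (simp add: sq_def a_def b_def x_def y_def)
    have delta: "c i - c j = (a - b) * (a + b)"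
      using wj by (simp add: a_def b_def wt_def algebra_simps flip: power2_eq_square)
    have a2: "a^2 \<le> W" "b^2 \<le> W" using wj wt_le_Wt[OF c] ij by (auto simp: a_def b_def W_def)
    have ab2: "(a + b)^2 \<le> 4 * W"
    proof -
      have "(a + b)^2 \<le> 2 * (a^2 + b^2)" by (rule sum_sq_le)
      also have "\<dots> \<le> 2 * (W + W)" using a2 by (intro mult_left_mono add_mono) auto
      finally show ?thesis by simp
    qed
    have "(c i - c j)^2 = (a - b)^2 * (a + b)^2" by (simp add: delta power_mult_distrib)
    also have "\<dots> \<le> (2 * E) * (4 * W)" using sq2 ab2 E0 by (intro mult_mono) auto
    also have "(2 * E) * (4 * W) = 8 * W * E" by simp
    finally show ?thesis by (simp add: E_def W_def)
  qed
qed


lemma surr_ge_H: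
  assumes K: "K \<ge> 1" and c: "\<forall>j<K. c j \<ge> 0"
  shows "Hent K c \<le> surrogate_loss K c v"
proof -
  have "0 \<le> (\<Sum>j<K. (sqrt (wt K c j) - sqrt (Wt K c * (exp (v j) / (\<Sum>m<K. exp (v m)))))^2)"
    by (intro sum_nonneg) auto
  thus ?thesis using hellinger[OF K c, of v] by linarith
qed

lemma eps_bound:
  assumes K: "K \<ge> 1" and c: "\<forall>j<K. c j \<ge> 0" and e: "e > 0"
  shows "surrogate_loss K c (\<lambda>j. ln (wt K c j + e)) \<le> Hent K c + real K * e"
proof -
  define W where "W = Wt K c"
  have W0: "W \<ge> 0" using Wt_nonneg[OF c] by (simp add: W_def)
  have ex: "exp (ln (wt K c j + e)) = wt K c j + e" if "j < K" for j
    using wt_nonneg[OF c that] e by simp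
  have Zeq: "(\<Sum>m<K. exp (ln (wt K c m + e))) = W + real K * e"
    using ex by (simp add: sum.distrib W_def Wt_def)
  have trm: "wt K c j * (ln (W + real K * e) - ln (wt K c j + e))
      \<le> wt K c j * ln (W / wt K c j) + wt K c j * (real K * e / W)" if j: "j < K" for j
  proof (cases "wt K c j = 0")
    case True thus ?thesis by simp
  next
    case False
    hence wp: "wt K c j > 0" using wt_nonneg[OF c j] by simp
    hence Wp: "W > 0" using wt_le_Wt[OF c j] by (simp add: W_def)
    have Zp: "W + real K * e > 0" using Wp e by (simp add: add_pos_nonneg)
    have "ln (W + real K * e) - ln (wt K c j + e) \<le> ln (W + real K * e) - ln (wt K c j)"
      using wp e by simp
    also have "\<dots> = ln (W / wt K c j) + ln ((W + real K * e) / W)"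
      using wp Wp Zp by (simp add: ln_div)
    also have "ln ((W + real K * e) / W) \<le> (W + real K * e) / W - 1"
      using Wp Zp by (intro ln_le_minus_one) simp
    also have "(W + real K * e) / W - 1 = real K * e / W" using Wp by (simp add: field_simps)
    finally have "ln (W + real K * e) - ln (wt K c j + e) \<le> ln (W / wt K c j) + real K * e / W"
      by simp
    hence "wt K c j * (ln (W + real K * e) - ln (wt K c j + e))
        \<le> wt K c j * (ln (W / wt K c j) + real K * e / W)" using wp by (intro mult_left_mono) auto
    thus ?thesis by (simp add: algebra_simps)
  qed
  have "surrogate_loss K c (\<lambda>j. ln (wt K c j + e))
      = (\<Sum>j<K. wt K c j * (ln (W + real K * e) - ln (wt K c j + e)))"
    by (simp add: surr_formula[OF K] Zeq)
  also have "\<dots> \<le> (\<Sum>j<K. wt K c j * ln (W / wt K c j) + wt K c j * (real K * e / W))"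
    using trm by (intro sum_mono) auto
  also have "\<dots> = Hent K c + W * (real K * e / W)"
    by (simp add: sum.distrib Hent_def W_def Wt_def sum_distrib_right sum_divide_distrib)
  also have "W * (real K * e / W) \<le> real K * e" using W0 e by (cases "W = 0") auto
  finally show ?thesis by simp
qed



lemma mvmult_measurable:
  "(\<lambda>p. fst p *v snd p :: real^'m) \<in> borel_measurable (borel :: ((real^'n^'m) \<times> (real^'n)) measure)"
  by (intro borel_measurable_continuous_onI)
     (simp add: matrix_vector_mult_def continuous_intros)

lemma cost_meas:
  fixes L :: "real^'n \<Rightarrow> real^'n^'n" and G Ut :: "(real^'n) \<times> (real^'n) \<Rightarrow> real^'n"
  assumes [measurable]: "L \<in> borel_measurable borel" "G \<in> borel_measurable borel" "Ut \<in> borel_measurable borel"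
     "C j \<in> borel_measurable borel"
  shows "expert_cost L G Ut C j \<in> borel_measurable borel"
proof -
  have fst: "(fst :: (real^'n) \<times> (real^'n) \<Rightarrow> _) \<in> borel_measurable borel"
    by (intro borel_measurable_continuous_onI continuous_intros)
  have [measurable]: "(\<lambda>\<omega>::(real^'n) \<times> (real^'n). L (fst \<omega>)) \<in> borel_measurable borel" using measurable_comp[OF fst assms(1)] by (simp add: o_def)
  hence A: "(\<lambda>\<omega>. (L (fst \<omega>), G \<omega> - Ut \<omega>)) \<in> borel_measurable borel" by measurable
  have "(\<lambda>\<omega>. L (fst \<omega>) *v (G \<omega> - Ut \<omega>)) \<in> borel_measurable borel"
    using measurable_comp[OF A mvmult_measurable] by (simp add: o_def)
  hence [measurable]: "(\<lambda>\<omega>. C j (L (fst \<omega>) *v (G \<omega> - Ut \<omega>))) \<in> borel_measurable borel" by measurable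
  show ?thesis unfolding expert_cost_def Let_def by measurable
qed




lemma squeeze_enn:
  fixes R D :: "nat \<Rightarrow> ennreal" and m :: ennreal
  assumes lo: "\<And>n. m \<le> R n"
    and up: "\<And>e n. e > 0 \<Longrightarrow> R n \<le> m + ennreal e + ennreal (k e) * D n"
    and D: "D \<longlonglongrightarrow> 0"
  shows "R \<longlonglongrightarrow> m"
proof (rule order_tendstoI)
  fix a assume "a < m" thus "eventually (\<lambda>n. a < R n) sequentially"
    using lo by (intro always_eventually allI) (auto intro: less_le_trans)
next
  fix a assume am: "m < a"
  have "(\<lambda>i. m + ennreal (1 / Suc i)) \<longlonglongrightarrow> m + ennreal 0"
    by (rule tendsto_add[OF tendsto_const tendsto_ennrealI[OF LIMSEQ_Suc[OF lim_const_over_n]]])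
  hence "eventually (\<lambda>i. m + ennreal (1 / Suc i) < a) sequentially" using am
    by (intro order_tendstoD(2)) simp_all
  then obtain i where i: "m + ennreal (1 / Suc i) < a" unfolding eventually_sequentially by blast
  define e where "e = 1 / real (Suc i)"
  have e: "e > 0" by (simp add: e_def)
  have "(\<lambda>n. m + ennreal e + ennreal (k e) * D n) \<longlonglongrightarrow> m + ennreal e + ennreal (k e) * 0"
    by (rule tendsto_add[OF tendsto_const ennreal_tendsto_cmult[OF _ D]]) simp
  hence "eventually (\<lambda>n. m + ennreal e + ennreal (k e) * D n < a) sequentially"
    using i by (intro order_tendstoD(2)) (simp_all add: e_def)
  thus "eventually (\<lambda>n. R n < a) sequentially"
    by eventually_elim (rule le_less_trans[OF up[OF e]])
qed

lemma argmin_ex: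
  fixes f :: "nat \<Rightarrow> real"
  assumes "K \<ge> 1"
  shows "\<exists>j<K. f j = Min (f ` {..<K}) \<and> (\<forall>k<K. f j \<le> f k)"
proof -
  have ne: "f ` {..<K} \<noteq> {}" using assms by (auto simp: lessThan_empty_iff)
  obtain j where "j < K" "f j = Min (f ` {..<K})" using Min_in[OF _ ne] by auto
  thus ?thesis by (auto intro: Min_le)
qed

lemma route_loss_eq: "r < K \<Longrightarrow> route_loss K c r = c r"
  unfolding route_loss_def by (simp add: mult.commute[of _ "if _ then _ else _"] if_distrib cong: if_cong)

lemma Hent_nonneg:
  assumes c: "\<forall>j<K. c j \<ge> 0" shows "Hent K c \<ge> 0"
  unfolding Hent_def
proof (intro sum_nonneg)
  fix j assume "j \<in> {..<K}"
  hence j: "j < K" by simp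
  show "wt K c j * ln (Wt K c / wt K c j) \<ge> 0"
  proof (cases "wt K c j = 0")
    case False
    hence wp: "wt K c j > 0" using wt_nonneg[OF c j] by simp
    have "Wt K c / wt K c j \<ge> 1" using wp wt_le_Wt[OF c j] by simp
    thus ?thesis using wp by simp
  qed simp
qed



lemma surr_meas:
  assumes f: "\<And>j. j < K \<Longrightarrow> f j \<in> borel_measurable N"
    and v: "\<And>j. j < K \<Longrightarrow> v j \<in> borel_measurable N"
  shows "(\<lambda>\<omega>. surrogate_loss K (\<lambda>j. f j \<omega>) (\<lambda>j. v j \<omega>)) \<in> borel_measurable N"
proof -
  have ex: "(\<lambda>\<omega>. exp (v j \<omega>)) \<in> borel_measurable N" if "j < K" for j
    using v[OF that] by measurable
  show ?thesis
    unfolding surrogate_loss_def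
    by (intro borel_measurable_uminus borel_measurable_sum borel_measurable_times
          borel_measurable_ln borel_measurable_divide borel_measurable_const ex f v; simp)
qed

lemma Hent_meas:
  assumes f: "\<And>j. j < K \<Longrightarrow> f j \<in> borel_measurable N"
  shows "(\<lambda>\<omega>. Hent K (\<lambda>j. f j \<omega>)) \<in> borel_measurable N"
  unfolding Hent_def Wt_def wt_def
  by (intro borel_measurable_sum borel_measurable_times borel_measurable_diff
          borel_measurable_ln borel_measurable_divide f; simp)

lemma Min_meas:
  fixes f :: "nat \<Rightarrow> 'a \<Rightarrow> real"
  assumes f: "\<And>j. j < K \<Longrightarrow> f j \<in> borel_measurable N"
  shows "(\<lambda>\<omega>. Min ((\<lambda>j. f j \<omega>) ` {..<K})) \<in> borel_measurable N"
  by (rule borel_measurable_Min) (auto intro: f)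


lemma router_prop:
  assumes K: "K \<ge> 1" and tb: "\<And>S. S \<noteq> {} \<Longrightarrow> S \<subseteq> {..<K} \<Longrightarrow> tb S \<in> S"
  shows "induced_router tb K g x < K \<and> (\<forall>k<K. g k x \<le> g (induced_router tb K g x) x)"
proof -
  define S where "S = {j. j < K \<and> (\<forall>k<K. g k x \<le> g j x)}"
  obtain j where "j < K" "\<forall>k<K. - g j x \<le> - g k x"
    using argmin_ex[OF K, of "\<lambda>j. - g j x"] by blast
  hence "j \<in> S" by (auto simp: S_def)
  hence "tb S \<in> S" by (intro tb) (auto simp: S_def)
  thus ?thesis by (simp add: induced_router_def S_def)
qed

lemma Wt_bound:
  assumes c: "\<forall>j<K. 0 \<le> c j" and E: "\<forall>j<K. c j \<le> E"
  shows "Wt K c \<le> real K * (real K * E)"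
proof -
  have S: "(\<Sum>k<K. c k) \<le> real K * E"
    using sum_bounded_above[of "{..<K}" c E] E by auto
  have "wt K c j \<le> real K * E" if "j < K" for j using S c that unfolding wt_def by (smt (verit))
  hence "Wt K c \<le> real (card {..<K}) * (real K * E)"
    unfolding Wt_def by (intro sum_bounded_above) auto
  thus ?thesis by simp
qed

lemma delta_bound:
  fixes d W B E e :: real
  assumes d: "0 \<le> d" "d^2 \<le> 8 * W * E" and W: "0 \<le> W" "W \<le> B" and E: "0 \<le> E" and e: "e > 0"
  shows "d \<le> e + 8 * B / e * E"
proof (cases "d \<le> e")
  case True
  have "0 \<le> 8 * B / e * E" using W E e by simp
  thus ?thesis using True by linarith
next
  case False
  have "d * e \<le> d * d" using False d by (intro mult_left_mono) auto
  also have "\<dots> \<le> 8 * W * E" using d by (simp add: power2_eq_square)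
  also have "\<dots> \<le> 8 * B * E" using W E by (intro mult_right_mono) auto
  finally have "d \<le> 8 * B * E / e" using e by (simp add: field_simps)
  moreover have "0 \<le> e" using e by simp
  ultimately show ?thesis by (simp add: field_simps)
qed



theorem theorem2:
  fixes M :: "((real^'n) \<times> (real^'n)) measure"
    and K :: nat
    and L :: "real^'n \<Rightarrow> real^'n^'n"
    and G Ut :: "(real^'n) \<times> (real^'n) \<Rightarrow> real^'n"
    and C :: "nat \<Rightarrow> real^'n \<Rightarrow> real^'n"
    and tb :: "nat set \<Rightarrow> nat"
    and E_min E_bar :: real
  assumes "K \<ge> 1"
    and "prob_space M"
    and "sets M = sets borel"
    and "L \<in> borel_measurable borel"
    and "G \<in> borel_measurable borel"
    and "Ut \<in> borel_measurable borel"
    and "\<And>j. j < K \<Longrightarrow> C j \<in> borel_measurable borel"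
    and "\<And>S. S \<noteq> {} \<Longrightarrow> S \<subseteq> {..<K} \<Longrightarrow> tb S \<in> S"
    and "0 < E_min"
    and "AE \<omega> in M. (\<forall>j<K. expert_cost L G Ut C j \<omega> < E_bar) \<and>
                     (\<exists>j<K. expert_cost L G Ut C j \<omega> > E_min)"
  shows "\<forall>gs :: nat \<Rightarrow> nat \<Rightarrow> 'n input \<Rightarrow> real.
           (\<forall>n j. j < K \<longrightarrow> gs n j \<in> borel_measurable borel) \<longrightarrow>
           (\<lambda>n. surrogate_risk M K (expert_cost L G Ut C) Ut (gs n))
              \<longlonglongrightarrow> surrogate_risk_star M K (expert_cost L G Ut C) Ut \<longrightarrow>
           (\<lambda>n. route_risk M K (expert_cost L G Ut C) Ut (induced_router tb K (gs n)))
              \<longlonglongrightarrow> route_risk_star M K (expert_cost L G Ut C) Ut"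
proof (intro allI impI)
  fix gs :: "nat \<Rightarrow> nat \<Rightarrow> 'n input \<Rightarrow> real"
  assume gm: "\<forall>n j. j < K \<longrightarrow> gs n j \<in> borel_measurable borel"
  assume conv0: "(\<lambda>n. surrogate_risk M K (expert_cost L G Ut C) Ut (gs n))
              \<longlonglongrightarrow> surrogate_risk_star M K (expert_cost L G Ut C) Ut"
  note K = assms(1)
  interpret prob_space M by (rule assms(2))
  define c where "c = expert_cost L G Ut C"
  define X where "X = (\<lambda>\<omega>::(real^'n) \<times> (real^'n). (fst \<omega>, snd \<omega>, Ut \<omega>))"
  define \<pi> where "\<pi> = (\<lambda>x::'n input. (fst x, fst (snd x)))"
  have sM: "\<And>N. (M \<rightarrow>\<^sub>M N) = (borel \<rightarrow>\<^sub>M N)" by (rule measurable_cong_sets[OF assms(3) refl])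
  have cnn: "0 \<le> c j \<omega>" for j \<omega> unfolding c_def expert_cost_def Let_def by simp
  have cnn': "\<forall>j<K. 0 \<le> c j \<omega>" for \<omega> using cnn by simp
  have cB: "c j \<in> borel_measurable borel" if "j < K" for j
    unfolding c_def using assms(4-6) assms(7)[OF that] by (rule cost_meas)
  have cM: "c j \<in> borel_measurable M" if "j < K" for j unfolding sM by (rule cB[OF that])
  have fstB: "(fst :: (real^'n) \<times> (real^'n) \<Rightarrow> _) \<in> borel_measurable borel"
    by (intro borel_measurable_continuous_onI continuous_intros)
  have sndB: "(snd :: (real^'n) \<times> (real^'n) \<Rightarrow> _) \<in> borel_measurable borel"
    by (intro borel_measurable_continuous_onI continuous_intros)
  have XB: "X \<in> borel \<rightarrow>\<^sub>M borel"
    unfolding X_def by (intro borel_measurable_Pair fstB sndB assms(6))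
  have XM: "X \<in> M \<rightarrow>\<^sub>M borel" unfolding sM by (rule XB)
  have piB: "\<pi> \<in> borel \<rightarrow>\<^sub>M borel"
    unfolding \<pi>_def by (intro borel_measurable_continuous_onI continuous_intros)
  have cpi: "(\<lambda>x. c j (\<pi> x)) \<in> borel_measurable borel" if "j < K" for j
    using measurable_comp[OF piB cB[OF that]] by (simp add: o_def)
  have piX: "\<pi> (fst \<omega>, snd \<omega>, Ut \<omega>) = \<omega>" for \<omega> by (simp add: \<pi>_def)
  define Hf where "Hf \<omega> = Hent K (\<lambda>j. c j \<omega>)" for \<omega>
  define mf where "mf \<omega> = Min ((\<lambda>j. c j \<omega>) ` {..<K})" for \<omega>
  define Psi where "Psi g \<omega> = surrogate_loss K (\<lambda>j. c j \<omega>) (\<lambda>j. g j (X \<omega>))"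
    for g :: "nat \<Rightarrow> 'n input \<Rightarrow> real" and \<omega>
  have HM[measurable]: "Hf \<in> borel_measurable M"
    unfolding Hf_def by (rule Hent_meas) (rule cM)
  have mB: "mf \<in> borel_measurable borel"
    unfolding mf_def by (rule Min_meas) (rule cB)
  have mM[measurable]: "mf \<in> borel_measurable M" unfolding sM by (rule mB)
  have PsiM[measurable]: "Psi (gs n) \<in> borel_measurable M" for n
  proof -
    have "(\<lambda>\<omega>. gs n j (X \<omega>)) \<in> borel_measurable M" if "j < K" for j
      using measurable_comp[OF XM, of "gs n j"] gm that by (simp add: o_def)
    thus ?thesis unfolding Psi_def by (intro surr_meas cM)
  qed
  have Hnn: "0 \<le> Hf \<omega>" for \<omega> unfolding Hf_def by (rule Hent_nonneg[OF cnn'])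
  define h where "h = (\<integral>\<^sup>+\<omega>. ennreal (Hf \<omega>) \<partial>M)"
  define m where "m = (\<integral>\<^sup>+\<omega>. ennreal (mf \<omega>) \<partial>M)"
  have conv: "(\<lambda>n. surrogate_risk M K c Ut (gs n)) \<longlonglongrightarrow> surrogate_risk_star M K c Ut"
    using conv0 by (simp only: c_def)
  have Star1: "surrogate_risk_star M K c Ut = h"
  proof (rule antisym)
    show "surrogate_risk_star M K c Ut \<le> h"
    proof (rule ennreal_le_epsilon)
      fix e :: real assume "h < top" "0 < e"
      define e' where "e' = e / real K"
      have e': "e' > 0" using \<open>0 < e\<close> K by (simp add: e'_def)
      define geps where "geps = (\<lambda>j (x::'n input). ln (wt K (\<lambda>k. c k (\<pi> x)) j + e'))"
      have gm': "\<forall>j<K. geps j \<in> borel_measurable borel"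
      proof (intro allI impI)
        fix j assume j: "j < K"
        show "geps j \<in> borel_measurable borel"
          unfolding geps_def wt_def
          by (intro borel_measurable_ln borel_measurable_add borel_measurable_diff
                borel_measurable_sum borel_measurable_const cpi j; simp)
      qed
      have "surrogate_risk_star M K c Ut \<le> surrogate_risk M K c Ut geps"
        unfolding surrogate_risk_star_def by (rule INF_lower) (use gm' in auto)
      also have "\<dots> \<le> (\<integral>\<^sup>+\<omega>. ennreal (Hf \<omega>) + ennreal e \<partial>M)"
        unfolding surrogate_risk_def
      proof (rule nn_integral_mono)
        fix \<omega>
        have "surrogate_loss K (\<lambda>j. c j \<omega>) (\<lambda>j. geps j (fst \<omega>, snd \<omega>, Ut \<omega>)) \<le> Hf \<omega> + real K * e'"
          using eps_bound[OF K cnn' e', of \<omega>] by (simp add: geps_def piX Hf_def)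
        also have "real K * e' = e" using K by (simp add: e'_def)
        finally have R: "surrogate_loss K (\<lambda>j. c j \<omega>) (\<lambda>j. geps j (fst \<omega>, snd \<omega>, Ut \<omega>)) \<le> Hf \<omega> + e" .
        have eq: "ennreal (Hf \<omega> + e) = ennreal (Hf \<omega>) + ennreal e"
          using Hnn[of \<omega>] \<open>0 < e\<close> by (intro ennreal_plus) auto
        show "ennreal (surrogate_loss K (\<lambda>j. c j \<omega>) (\<lambda>j. geps j (fst \<omega>, snd \<omega>, Ut \<omega>)))
            \<le> ennreal (Hf \<omega>) + ennreal e"
          using ennreal_leI[OF R] by (simp only: eq)
      qed
      also have "\<dots> = (\<integral>\<^sup>+\<omega>. ennreal (Hf \<omega>) \<partial>M) + (\<integral>\<^sup>+\<omega>. ennreal e \<partial>M)"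
        by (rule nn_integral_add) measurable
      also have "\<dots> = h + ennreal e" by (simp only: h_def nn_integral_const emeasure_space_1 mult_1_right)
      finally show "surrogate_risk_star M K c Ut \<le> h + ennreal e" .
    qed
  next
    show "h \<le> surrogate_risk_star M K c Ut"
      unfolding surrogate_risk_star_def h_def surrogate_risk_def
      by (rule INF_greatest, rule nn_integral_mono, rule ennreal_leI) (simp add: Hf_def surr_ge_H[OF K cnn'])
  qed
  define r0 where "r0 = (\<lambda>x::'n input. LEAST j. j < K \<and> c j (\<pi> x) \<le> mf (\<pi> x))"
  have r0p: "r0 x < K \<and> c (r0 x) (\<pi> x) = mf (\<pi> x)" for x
  proof -
    obtain j where j: "j < K" "c j (\<pi> x) = mf (\<pi> x)"
      using argmin_ex[OF K, of "\<lambda>j. c j (\<pi> x)"] by (auto simp: mf_def)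
    have 1: "r0 x < K \<and> c (r0 x) (\<pi> x) \<le> mf (\<pi> x)" unfolding r0_def
      by (rule LeastI[of _ j]) (use j in simp)
    moreover have "mf (\<pi> x) \<le> c (r0 x) (\<pi> x)" unfolding mf_def using 1 by (intro Min_le) auto
    ultimately show ?thesis by simp
  qed
  have r0m: "r0 \<in> borel \<rightarrow>\<^sub>M count_space UNIV"
    unfolding r0_def
  proof (rule measurable_Least)
    fix i
    show "(\<lambda>x. i < K \<and> c i (\<pi> x) \<le> mf (\<pi> x)) \<in> borel \<rightarrow>\<^sub>M count_space UNIV"
    proof (cases "i < K")
      case True
      have [measurable]: "(\<lambda>x. c i (\<pi> x)) \<in> borel_measurable borel" using cpi True .
      have [measurable]: "(\<lambda>x. mf (\<pi> x)) \<in> borel_measurable borel"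
        using measurable_comp[OF piB mB] by (simp add: o_def)
      show ?thesis using True by measurable
    next
      case False thus ?thesis by simp
    qed
  qed
  have rbound: "m \<le> route_risk M K c Ut r" if r: "\<forall>x. r x < K" for r
    unfolding route_risk_def m_def
    by (rule nn_integral_mono, rule ennreal_leI) (simp add: route_loss_eq r mf_def Min_le)
  have Star2: "route_risk_star M K c Ut = m"
  proof (rule antisym)
    have "route_risk_star M K c Ut \<le> route_risk M K c Ut r0"
      unfolding route_risk_star_def by (rule INF_lower) (use r0m r0p in auto)
    also have "route_risk M K c Ut r0 = m" unfolding route_risk_def m_def
    proof (rule nn_integral_cong)
      fix \<omega> 
      show "ennreal (route_loss K (\<lambda>j. c j \<omega>) (r0 (fst \<omega>, snd \<omega>, Ut \<omega>))) = ennreal (mf \<omega>)"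
        using r0p[of "(fst \<omega>, snd \<omega>, Ut \<omega>)"] by (simp add: piX route_loss_eq)
    qed
    finally show "route_risk_star M K c Ut \<le> m" .
  next
    show "m \<le> route_risk_star M K c Ut"
      unfolding route_risk_star_def by (rule INF_greatest) (use rbound in auto)
  qed
  have AEbd: "AE \<omega> in M. \<forall>j<K. c j \<omega> < E_bar"
    using assms(10) by eventually_elim (simp add: c_def)
  define B where "B = real K * (real K * E_bar)"
  have hfin: "h \<noteq> \<top>"
  proof -
    have "h \<le> (\<integral>\<^sup>+\<omega>. ennreal (B * ln (real K)) \<partial>M)" unfolding h_def
    proof (rule nn_integral_mono_AE)
      show "AE \<omega> in M. ennreal (Hf \<omega>) \<le> ennreal (B * ln (real K))" using AEbd
      proof eventually_elim
        fix \<omega> assume bd: "\<forall>j<K. c j \<omega> < E_bar"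
        have bd': "\<forall>j<K. c j \<omega> \<le> E_bar" using bd by (auto intro: less_imp_le)
        have "Hf \<omega> \<le> surrogate_loss K (\<lambda>j. c j \<omega>) (\<lambda>_. 0)"
          unfolding Hf_def by (rule surr_ge_H[OF K cnn'])
        also have "\<dots> = Wt K (\<lambda>j. c j \<omega>) * ln (real K)"
          by (simp add: surr_formula[OF K] Wt_def sum_distrib_right)
        also have "\<dots> \<le> B * ln (real K)"
          using Wt_bound[OF cnn' bd'] bd K by (intro mult_right_mono) (auto simp: B_def)
        finally show "ennreal (Hf \<omega>) \<le> ennreal (B * ln (real K))" by (rule ennreal_leI)
      qed
    qed
    also have "\<dots> < \<top>" by (simp add: emeasure_space_1)
    finally show ?thesis by simp
  qed
  define D where "D n = (\<integral>\<^sup>+\<omega>. ennreal (Psi (gs n) \<omega> - Hf \<omega>) \<partial>M)" for n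
  have DH: "D n + h = surrogate_risk M K c Ut (gs n)" for n
  proof -
    have "D n + h = (\<integral>\<^sup>+\<omega>. ennreal (Psi (gs n) \<omega> - Hf \<omega>) + ennreal (Hf \<omega>) \<partial>M)"
      unfolding D_def h_def by (rule nn_integral_add[symmetric]) measurable
    also have "\<dots> = surrogate_risk M K c Ut (gs n)"
      unfolding surrogate_risk_def
    proof (rule nn_integral_cong)
      fix \<omega>
      have "Hf \<omega> \<le> Psi (gs n) \<omega>" unfolding Hf_def Psi_def by (rule surr_ge_H[OF K cnn'])
      hence "ennreal (Psi (gs n) \<omega> - Hf \<omega>) + ennreal (Hf \<omega>) = ennreal (Psi (gs n) \<omega> - Hf \<omega> + Hf \<omega>)"
        using Hnn[of \<omega>] by (intro ennreal_plus[symmetric]) auto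
      thus "ennreal (Psi (gs n) \<omega> - Hf \<omega>) + ennreal (Hf \<omega>)
          = ennreal (surrogate_loss K (\<lambda>j. c j \<omega>) (\<lambda>j. gs n j (fst \<omega>, snd \<omega>, Ut \<omega>)))"
        by (simp add: Psi_def X_def)
    qed
    finally show ?thesis .
  qed
  have D0: "D \<longlonglongrightarrow> 0"
  proof -
    have "(\<lambda>n. surrogate_risk M K c Ut (gs n) - h) \<longlonglongrightarrow> h - h"
      using conv unfolding Star1 by (rule tendsto_diff_ennreal[OF _ tendsto_const]) (use hfin in auto)
    moreover have "surrogate_risk M K c Ut (gs n) - h = D n" for n
      using DH[of n, symmetric] hfin by simp
    ultimately show ?thesis using hfin by simp
  qed
  have lower: "m \<le> route_risk M K c Ut (induced_router tb K (gs n))" for n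
    by (rule rbound) (intro allI conjunct1[OF router_prop[OF K assms(8)]])
  have up: "route_risk M K c Ut (induced_router tb K (gs n)) \<le> m + ennreal e + ennreal (8 * B / e) * D n"
    if e: "e > 0" for e n
  proof -
    have "route_risk M K c Ut (induced_router tb K (gs n)) \<le>
      (\<integral>\<^sup>+\<omega>. ennreal (mf \<omega>) + ennreal e + ennreal (8 * B / e) * ennreal (Psi (gs n) \<omega> - Hf \<omega>) \<partial>M)"
      unfolding route_risk_def
    proof (rule nn_integral_mono_AE)
      show "AE \<omega> in M. ennreal (route_loss K (\<lambda>j. c j \<omega>) (induced_router tb K (gs n) (fst \<omega>, snd \<omega>, Ut \<omega>)))
         \<le> ennreal (mf \<omega>) + ennreal e + ennreal (8 * B / e) * ennreal (Psi (gs n) \<omega> - Hf \<omega>)"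
        using AEbd
      proof eventually_elim
        fix \<omega> assume bd: "\<forall>j<K. c j \<omega> < E_bar"
        have bd': "\<forall>j<K. c j \<omega> \<le> E_bar" using bd by (auto intro: less_imp_le)
        define i where "i = induced_router tb K (gs n) (fst \<omega>, snd \<omega>, Ut \<omega>)"
        have iX: "induced_router tb K (gs n) (X \<omega>) = i" by (simp only: i_def X_def)
        have i0: "i < K \<and> (\<forall>k<K. gs n k (X \<omega>) \<le> gs n i (X \<omega>))"
          using router_prop[OF K assms(8), of "gs n" "X \<omega>"] unfolding iX .
        have i: "i < K" "\<forall>k<K. gs n k (X \<omega>) \<le> gs n i (X \<omega>)" using i0 by auto
        obtain j where j: "j < K" "c j \<omega> = mf \<omega>" "\<forall>k<K. c j \<omega> \<le> c k \<omega>"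
          using argmin_ex[OF K, of "\<lambda>j. c j \<omega>"] by (auto simp: mf_def)
        define E where "E = Psi (gs n) \<omega> - Hf \<omega>"
        have E0: "0 \<le> E" unfolding E_def Hf_def Psi_def using surr_ge_H[OF K cnn'] by simp
        have W: "Wt K (\<lambda>j. c j \<omega>) \<le> B"
          using Wt_bound[OF cnn' bd'] bd by (auto simp: B_def)
        have W0: "0 \<le> Wt K (\<lambda>j. c j \<omega>)" by (rule Wt_nonneg[OF cnn'])
        have pre1: "gs n j (X \<omega>) \<le> gs n i (X \<omega>)" using i(2) j(1) by blast
        have pre2: "c j \<omega> \<le> c i \<omega>" using j(3) i(1) by blast
        have sq: "(c i \<omega> - c j \<omega>)^2 \<le> 8 * Wt K (\<lambda>j. c j \<omega>) * E"
          unfolding E_def Psi_def Hf_def by (rule route_bound[OF K cnn' i(1) j(1)]) (use pre1 pre2 in auto)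
        have "c i \<omega> - c j \<omega> \<le> e + 8 * B / e * E"
          by (rule delta_bound[OF _ sq W0 W E0 e]) (use i j in simp)
        hence R: "c i \<omega> \<le> mf \<omega> + e + 8 * B / e * E" using j by simp
        have B0: "0 \<le> B" using W W0 by simp
        have eq: "ennreal (mf \<omega> + e + 8 * B / e * E) = ennreal (mf \<omega>) + ennreal e + ennreal (8 * B / e) * ennreal E"
        proof -
          have m0: "0 \<le> mf \<omega>" using j cnn by metis
          have "ennreal (mf \<omega> + e + 8 * B / e * E) = ennreal (mf \<omega> + e) + ennreal (8 * B / e * E)"
            using m0 e B0 E0 by (intro ennreal_plus) auto
          also have "ennreal (mf \<omega> + e) = ennreal (mf \<omega>) + ennreal e"
            using m0 e by (intro ennreal_plus) auto
          also have "ennreal (8 * B / e * E) = ennreal (8 * B / e) * ennreal E"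
            using e B0 E0 by (intro ennreal_mult) auto
          finally show ?thesis .
        qed
        have "ennreal (route_loss K (\<lambda>j. c j \<omega>) i) = ennreal (c i \<omega>)"
          using route_loss_eq[OF i(1)] by (rule arg_cong)
        also have "\<dots> \<le> ennreal (mf \<omega> + e + 8 * B / e * E)" by (rule ennreal_leI[OF R])
        also have "\<dots> = ennreal (mf \<omega>) + ennreal e + ennreal (8 * B / e) * ennreal E" by (rule eq)
        finally show "ennreal (route_loss K (\<lambda>j. c j \<omega>) (induced_router tb K (gs n) (fst \<omega>, snd \<omega>, Ut \<omega>)))
         \<le> ennreal (mf \<omega>) + ennreal e + ennreal (8 * B / e) * ennreal (Psi (gs n) \<omega> - Hf \<omega>)"
          by (simp only: i_def E_def)
      qed
    qed
    also have "\<dots> = (\<integral>\<^sup>+\<omega>. ennreal (mf \<omega>) + ennreal e \<partial>M) + (\<integral>\<^sup>+\<omega>. ennreal (8 * B / e) * ennreal (Psi (gs n) \<omega> - Hf \<omega>) \<partial>M)"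
      by (rule nn_integral_add) measurable
    also have "(\<integral>\<^sup>+\<omega>. ennreal (mf \<omega>) + ennreal e \<partial>M) = m + (\<integral>\<^sup>+\<omega>. ennreal e \<partial>M)"
      unfolding m_def by (rule nn_integral_add) measurable
    also have "(\<integral>\<^sup>+\<omega>. ennreal e \<partial>M) = ennreal e"
      by (simp only: nn_integral_const emeasure_space_1 mult_1_right)
    also have "(\<integral>\<^sup>+\<omega>. ennreal (8 * B / e) * ennreal (Psi (gs n) \<omega> - Hf \<omega>) \<partial>M) = ennreal (8 * B / e) * D n"
      unfolding D_def by (rule nn_integral_cmult) measurable
    finally show ?thesis .
  qed
  have final: "(\<lambda>n. route_risk M K c Ut (induced_router tb K (gs n))) \<longlonglongrightarrow> route_risk_star M K c Ut"
    unfolding Star2 by (rule squeeze_enn[where k="\<lambda>e. 8 * B / e", OF lower up D0])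
  show "(\<lambda>n. route_risk M K (expert_cost L G Ut C) Ut (induced_router tb K (gs n)))
              \<longlonglongrightarrow> route_risk_star M K (expert_cost L G Ut C) Ut"
    using final by (simp only: c_def)
qed

end
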